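(* Consider the two-dimensional map defined below with heterogeneity in speculative trading strategies, i.e. $w^F\neq 0$ and $w^C\neq 0$. Then, in addition to the equilibrium $P_1=(-\Omega\Delta y^{BP},\Delta y^{BP})$, the map admits two additional equilibria $P_2=(\bar e_2,\Delta\bar y_2)$ and $P_3=(\bar e_3,\Delta\bar y_3)$ given by $$\bar e_{2,3}=-\Omega\Delta y^{BP}\pm\sqrt{\frac{w^C}{w^F}},\qquad \Delta\bar y_{2,3}=\Delta y^{BP}.$$
   Context: The state variables are the (log) exchange rate $e_t$ and the output growth rate $\Delta y_t$, evolving according to the map $$e_t=e_{t-1}+(\mu+\rho)\left[w^F\left(-\Omega\Delta y_{t-1}-e_{t-1}\right)^3+w^C\left(e_{t-1}+\Omega\Delta y_{t-1}\right)\right],$$ $$\Delta y_t=\Delta y_{t-1}+w^{flex}\beta\left\{\Delta y^{BP}-\gamma\left[w^F\left(-\Omega\Delta y_{t-1}-e_{t-1}\right)^3+w^C\left(e_{t-1}+\Omega\Delta y_{t-1}\right)\right]-\Delta y_{t-1}\right\},$$ where $\mu>0$, $\rho>0$, $0<\beta<1$, $0<\Omega<1$, $0<w^{flex}<1$, $\Delta y^{BP}\in\mathbb{R}$ is a constant, $\gamma=\frac{(1-\theta)(\mu+\rho)}{\theta\pi}>0$ with $\theta\in(0,1)$, $\pi>0$, and $w^F,w^C\in(0,1)$ are the shares of fundamentalists and chartists with $w^F+w^C=1$. An equilibrium is a fixed point $(\bar e,\Delta\bar y)$ of this map. *)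

theory Defs
  imports Complex_Main
begin

definition gam :: "real \<Rightarrow> real \<Rightarrow> real \<Rightarrow> real \<Rightarrow> real" where
  "gam mu rho theta pii = (1 - theta) * (mu + rho) / (theta * pii)"

definition spec_term :: "real \<Rightarrow> real \<Rightarrow> real \<Rightarrow> real \<Rightarrow> real \<Rightarrow> real" where
  "spec_term wF wC Omega e dy = wF * (- Omega * dy - e) ^ 3 + wC * (e + Omega * dy)"

definition exch_map ::
  "real \<Rightarrow> real \<Rightarrow> real \<Rightarrow> real \<Rightarrow> real \<Rightarrow> real \<Rightarrow> real \<Rightarrow> real \<Rightarrow> real \<Rightarrow> real
   \<Rightarrow> real \<times> real \<Rightarrow> real \<times> real" where
  "exch_map mu rho beta Omega wflex dyBP theta pii wF wC =
     (\<lambda>(e, dy).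
       (e + (mu + rho) * spec_term wF wC Omega e dy,
        dy + wflex * beta * (dyBP - gam mu rho theta pii * spec_term wF wC Omega e dy - dy)))"

end

theory Submission
  imports Defs
begin

lemma key:
  fixes wF wC z :: real
  assumes "wF > 0" "wC > 0"
  shows "wF * (- z) ^ 3 + wC * z = 0 \<longleftrightarrow> z = 0 \<or> z = sqrt (wC / wF) \<or> z = - sqrt (wC / wF)"
proof -
  have s: "sqrt (wC / wF) ^ 2 = wC / wF" using assms by simp
  have "wF * (- z) ^ 3 + wC * z = z * wF * (wC / wF - z^2)"
    using assms by (simp add: field_simps power3_eq_cube power2_eq_square)
  also have "\<dots> = z * wF * (sqrt (wC / wF) - z) * (sqrt (wC / wF) + z)"
    using s by (simp add: algebra_simps power2_eq_square)
  finally show ?thesis using assms by auto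
qed

theorem proposition2:
  fixes mu rho beta Omega wflex dyBP theta pii wF wC :: real
  assumes "mu > 0" and "rho > 0" and "0 < beta" and "beta < 1"
    and "0 < Omega" and "Omega < 1" and "0 < wflex" and "wflex < 1"
    and "0 < theta" and "theta < 1" and "pii > 0"
    and "0 < wF" and "wF < 1" and "0 < wC" and "wC < 1" and "wF + wC = 1"
  shows "{p. exch_map mu rho beta Omega wflex dyBP theta pii wF wC p = p}
           = {(- Omega * dyBP, dyBP),
              (- Omega * dyBP + sqrt (wC / wF), dyBP),
              (- Omega * dyBP - sqrt (wC / wF), dyBP)}
         \<and> distinct [(- Omega * dyBP, dyBP),
              (- Omega * dyBP + sqrt (wC / wF), dyBP),
              (- Omega * dyBP - sqrt (wC / wF), dyBP)]"
proof
  have sp: "sqrt (wC / wF) > 0" using assms by simp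
  have fix_iff: "exch_map mu rho beta Omega wflex dyBP theta pii wF wC (e, dy) = (e, dy)
     \<longleftrightarrow> spec_term wF wC Omega e dy = 0 \<and> dy = dyBP" for e dy
  proof -
    have mr: "mu + rho \<noteq> 0" using assms by simp
    have wb: "wflex * beta \<noteq> 0" using assms by simp
    show ?thesis
      unfolding exch_map_def using mr wb by auto
  qed
  have st: "spec_term wF wC Omega e dy = 0 \<longleftrightarrow>
     e + Omega * dy = 0 \<or> e + Omega * dy = sqrt (wC / wF) \<or> e + Omega * dy = - sqrt (wC / wF)" for e dy
  proof -
    have "spec_term wF wC Omega e dy = wF * (- (e + Omega * dy)) ^ 3 + wC * (e + Omega * dy)"
      proof -
        have "- Omega * dy - e = - (e + Omega * dy)" by simp
        then show ?thesis unfolding spec_term_def by (simp only:)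
      qed
    then show ?thesis using key[of wF wC "e + Omega * dy"] assms by simp
  qed
  show "{p. exch_map mu rho beta Omega wflex dyBP theta pii wF wC p = p}
           = {(- Omega * dyBP, dyBP),
              (- Omega * dyBP + sqrt (wC / wF), dyBP),
              (- Omega * dyBP - sqrt (wC / wF), dyBP)}"
  proof (rule set_eqI)
    fix p :: "real \<times> real"
    obtain e dy where p: "p = (e, dy)" by (cases p)
    show "p \<in> {p. exch_map mu rho beta Omega wflex dyBP theta pii wF wC p = p} \<longleftrightarrow> p \<in> {(- Omega * dyBP, dyBP),
              (- Omega * dyBP + sqrt (wC / wF), dyBP),
              (- Omega * dyBP - sqrt (wC / wF), dyBP)}"
      unfolding p using fix_iff[of e dy] st[of e dy] by (auto simp: algebra_simps)
  qed
  show "distinct [(- Omega * dyBP, dyBP),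
              (- Omega * dyBP + sqrt (wC / wF), dyBP),
              (- Omega * dyBP - sqrt (wC / wF), dyBP)]"
    using sp by auto
qed

end
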